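(* Assume the feature groups $\boldsymbol X_{\mathcal X(1)},\dots,\boldsymbol X_{\mathcal X(M)}$ are mutually independent and $f(\boldsymbol X)=\sum_{m\in S_1}h_m(\boldsymbol X_{\mathcal X(m)})+\sum_{J\in S_2}h_J(\boldsymbol X_{\mathcal X(J)})$, where $S_1\subset\{1,\dots,M\}$, $S_2$ is a collection of two-element subsets of $\{1,\dots,M\}$, $\mathbb Eh_m(\boldsymbol X_{\mathcal X(m)})=0$ for $m\in S_1$, and $\mathbb E(h_J(\boldsymbol X_{\mathcal X(J)})\mid\boldsymbol X_{\mathcal X(l)})=0$ for every $J\in S_2$ and $l\in J$; set $h_J\equiv0$ for $J\notin\{\{m\}:m\in S_1\}\cup S_2$ and $h_m=h_{\{m\}}$. Let $K\ge1$ and let $J_1,\dots,J_{2K}$ be pairwise distinct subsets of $\{1,\dots,M\}$ with $\#J_l=1$ for $l\le K$ and $\#J_l=2$ for $K<l\le 2K$. Define $R_0\equiv0$ and $R_s(\boldsymbol X)=R_{s-1}(\boldsymbol X)+\mathbb E(f(\boldsymbol X)-R_{s-1}(\boldsymbol X)\mid\boldsymbol X_{\mathcal X(J_s)})$. Then for every $0<s\le 2K$, $$R_s(\boldsymbol X)=\sum_{l=1}^sh_{J_l}(\boldsymbol X_{\mathcal X(J_l)})+\sum_{m\in(\bigcup_{k=K+1}^sJ_k)\setminus(\bigcup_{k=1}^KJ_k)}h_m(\boldsymbol X_{\mathcal X(m)}),$$ where a sum over an empty index set is zero.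
   Context: $\boldsymbol X=(X_1,\dots,X_p)^\top$ is a random vector in $\{0,1\}^p$; $\{1,\dots,p\}$ is partitioned into disjoint nonempty feature groups $\mathcal X(1),\dots,\mathcal X(M)$; $\mathcal X(J)=\bigcup_{m\in J}\mathcal X(m)$ and $\boldsymbol X_{\mathcal X(J)}=(X_j)_{j\in\mathcal X(J)}$. The functions $h_J$ are real-valued measurable functions of $\boldsymbol X_{\mathcal X(J)}$. *)

theory Defs
  imports "HOL-Probability.Probability"
begin

text \<open>Features are indexed by 1..p; a realisation of X is a vector x :: nat \<Rightarrow> bool
  (True = 1, False = 0). The groups are G 1, ..., G M.\<close>

definition grp_union :: "(nat \<Rightarrow> nat set) \<Rightarrow> nat set \<Rightarrow> nat set" where
  "grp_union G J = (\<Union>m\<in>J. G m)"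

definition cond_exp_coords ::
  "(nat \<Rightarrow> bool) pmf \<Rightarrow> nat set \<Rightarrow> ((nat \<Rightarrow> bool) \<Rightarrow> real) \<Rightarrow> (nat \<Rightarrow> bool) \<Rightarrow> real" where
  "cond_exp_coords P A g x =
     measure_pmf.expectation (cond_pmf P {y. restrict y A = restrict x A}) g"

primrec Rseq ::
  "(nat \<Rightarrow> bool) pmf \<Rightarrow> (nat \<Rightarrow> nat set) \<Rightarrow> ((nat \<Rightarrow> bool) \<Rightarrow> real) \<Rightarrow> (nat \<Rightarrow> nat set)
    \<Rightarrow> nat \<Rightarrow> (nat \<Rightarrow> bool) \<Rightarrow> real" where
  "Rseq P G f Js 0 = (\<lambda>x. 0)"
| "Rseq P G f Js (Suc s) = (\<lambda>x. Rseq P G f Js s x +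
      cond_exp_coords P (grp_union G (Js (Suc s))) (\<lambda>y. f y - Rseq P G f Js s y) x)"

end

theory Submission
  imports Defs
begin


lemma measure_repr:
  assumes "finite (set_pmf P)"
  shows "measure P S = (\<Sum>y\<in>{y\<in>set_pmf P. y \<in> S}. pmf P y)"
proof -
  have "measure P S = measure P (S \<inter> set_pmf P)" by (simp add: measure_Int_set_pmf)
  also have "\<dots> = sum (pmf P) (S \<inter> set_pmf P)" using assms by (intro measure_measure_pmf_finite) auto
  also have "S \<inter> set_pmf P = {y\<in>set_pmf P. y \<in> S}" by auto
  finally show ?thesis .
qed

lemma ce_repr:
  assumes fin: "finite (set_pmf P)" and x: "x \<in> set_pmf P"
  shows "cond_exp_coords P A g x =
    (\<Sum>y\<in>{y\<in>set_pmf P. restrict y A = restrict x A}. g y * pmf P y) /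
      measure P {y. restrict y A = restrict x A}"
proof -
  let ?S = "{y. restrict y A = restrict x A}"
  have ne: "set_pmf P \<inter> ?S \<noteq> {}" using x by auto
  have "cond_exp_coords P A g x = (\<Sum>a\<in>{y\<in>set_pmf P. restrict y A = restrict x A}. g a * pmf (cond_pmf P ?S) a)"
    unfolding cond_exp_coords_def
    by (rule integral_measure_pmf_real) (use fin ne in \<open>auto simp: set_cond_pmf[OF ne]\<close>)
  also have "\<dots> = (\<Sum>a\<in>{y\<in>set_pmf P. restrict y A = restrict x A}. g a * pmf P a / measure P ?S)"
    by (intro sum.cong refl) (simp add: pmf_cond[OF ne])
  also have "\<dots> = (\<Sum>y\<in>{y\<in>set_pmf P. restrict y A = restrict x A}. g y * pmf P y) /
      measure P ?S"
    by (simp add: sum_divide_distrib)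
  finally show ?thesis .
qed

lemma ce_pos:
  assumes x: "x \<in> set_pmf P"
  shows "measure P {y. restrict y A = restrict x A} > 0"
  using x by (intro measure_pmf_posI) auto

lemma ce_cong:
  assumes fin: "finite (set_pmf P)" and x: "x \<in> set_pmf P"
    and eq: "\<And>y. y \<in> set_pmf P \<Longrightarrow> restrict y A = restrict x A \<Longrightarrow> g1 y = g2 y"
  shows "cond_exp_coords P A g1 x = cond_exp_coords P A g2 x"
  unfolding ce_repr[OF fin x] using eq by (intro arg_cong2[where f="(/)"] sum.cong refl) auto

lemma ce_const:
  assumes fin: "finite (set_pmf P)" and x: "x \<in> set_pmf P"
    and eq: "\<And>y. y \<in> set_pmf P \<Longrightarrow> restrict y A = restrict x A \<Longrightarrow> g y = c"
  shows "cond_exp_coords P A g x = c"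
proof -
  have "cond_exp_coords P A g x = (\<Sum>y\<in>{y\<in>set_pmf P. restrict y A = restrict x A}. c * pmf P y) /
      measure P {y. restrict y A = restrict x A}"
    unfolding ce_repr[OF fin x] using eq by (intro arg_cong2[where f="(/)"] sum.cong refl) auto
  also have "\<dots> = c * measure P {y. restrict y A = restrict x A} / measure P {y. restrict y A = restrict x A}"
    by (simp add: measure_repr[OF fin] sum_distrib_left)
  also have "\<dots> = c" using ce_pos[OF x, of A] by simp
  finally show ?thesis .
qed

lemma ce_add:
  assumes fin: "finite (set_pmf P)" and x: "x \<in> set_pmf P"
  shows "cond_exp_coords P A (\<lambda>y. g1 y + g2 y) x = cond_exp_coords P A g1 x + cond_exp_coords P A g2 x"
  unfolding ce_repr[OF fin x] by (simp add: distrib_right sum.distrib add_divide_distrib)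

lemma ce_diff:
  assumes fin: "finite (set_pmf P)" and x: "x \<in> set_pmf P"
  shows "cond_exp_coords P A (\<lambda>y. g1 y - g2 y) x = cond_exp_coords P A g1 x - cond_exp_coords P A g2 x"
  unfolding ce_repr[OF fin x] by (simp add: left_diff_distrib sum_subtractf diff_divide_distrib)

lemma ce_sum:
  assumes fin: "finite (set_pmf P)" and x: "x \<in> set_pmf P"
  shows "cond_exp_coords P A (\<lambda>y. \<Sum>i\<in>I. g i y) x = (\<Sum>i\<in>I. cond_exp_coords P A (g i) x)"
  unfolding ce_repr[OF fin x] by (simp add: sum_distrib_right sum_divide_distrib[symmetric] sum.swap[of _ I])

lemma group:
  assumes fin: "finite (set_pmf P)"
  shows "(\<Sum>y\<in>{y\<in>set_pmf P. Q y}. \<psi> (\<pi> y) * pmf P y)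
     = (\<Sum>b\<in>\<pi> ` set_pmf P. \<psi> b * measure P {y. Q y \<and> \<pi> y = b})"
proof -
  have "(\<Sum>y\<in>{y\<in>set_pmf P. Q y}. \<psi> (\<pi> y) * pmf P y) = (\<Sum>b\<in>\<pi> ` set_pmf P. \<Sum>y\<in>{y\<in>{y\<in>set_pmf P. Q y}. \<pi> y = b}. \<psi> (\<pi> y) * pmf P y)"
    by (rule sum.group[symmetric]) (use fin in auto)
  also have "\<dots> = (\<Sum>b\<in>\<pi> ` set_pmf P. \<psi> b * measure P {y. Q y \<and> \<pi> y = b})"
  proof (rule sum.cong[OF refl])
    fix b assume "b \<in> \<pi> ` set_pmf P"
    have "(\<Sum>y\<in>{y\<in>{y\<in>set_pmf P. Q y}. \<pi> y = b}. \<psi> (\<pi> y) * pmf P y) = (\<Sum>y\<in>{y\<in>set_pmf P. y \<in> {y. Q y \<and> \<pi> y = b}}. \<psi> b * pmf P y)"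
      by (intro sum.cong) auto
    also have "\<dots> = \<psi> b * measure P {y. Q y \<and> \<pi> y = b}"
      by (simp add: measure_repr[OF fin] sum_distrib_left)
    finally show "(\<Sum>y\<in>{y\<in>{y\<in>set_pmf P. Q y}. \<pi> y = b}. \<psi> (\<pi> y) * pmf P y) = \<psi> b * measure P {y. Q y \<and> \<pi> y = b}" .
  qed
  finally show ?thesis .
qed



lemma tower:
  assumes fin: "finite (set_pmf P)"
  shows "(\<Sum>x\<in>set_pmf P. pmf P x * cond_exp_coords P A g x) = (\<Sum>y\<in>set_pmf P. g y * pmf P y)"
proof -
  define \<mu> where "\<mu> x = measure P {y. restrict y A = restrict x A}" for x
  have mu_sym: "\<mu> x = \<mu> y" if "restrict y A = restrict x A" for x y
    unfolding \<mu>_def using that by simp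
  have mu_pos: "\<mu> y > 0" if "y \<in> set_pmf P" for y unfolding \<mu>_def using ce_pos[OF that] .
  have "(\<Sum>x\<in>set_pmf P. pmf P x * cond_exp_coords P A g x)
      = (\<Sum>x\<in>set_pmf P. \<Sum>y\<in>set_pmf P. if restrict y A = restrict x A then pmf P x * g y * pmf P y / \<mu> x else 0)"
  proof (rule sum.cong[OF refl])
    fix x assume x: "x \<in> set_pmf P"
    show "pmf P x * cond_exp_coords P A g x = (\<Sum>y\<in>set_pmf P. if restrict y A = restrict x A then pmf P x * g y * pmf P y / \<mu> x else 0)"
      unfolding ce_repr[OF fin x] \<mu>_def[symmetric]
      by (simp add: sum.inter_filter[OF fin] sum_distrib_left sum_divide_distrib mult.assoc, intro sum.cong refl, simp)
  qed
  also have "\<dots> = (\<Sum>y\<in>set_pmf P. \<Sum>x\<in>set_pmf P. if restrict y A = restrict x A then pmf P x * g y * pmf P y / \<mu> x else 0)"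
    by (rule sum.swap)
  also have "\<dots> = (\<Sum>y\<in>set_pmf P. g y * pmf P y * ((\<Sum>x\<in>{x\<in>set_pmf P. x \<in> {z. restrict z A = restrict y A}}. pmf P x) / \<mu> y))"
  proof (rule sum.cong[OF refl])
    fix y assume y: "y \<in> set_pmf P"
    have "(\<Sum>x\<in>set_pmf P. if restrict y A = restrict x A then pmf P x * g y * pmf P y / \<mu> x else 0)
        = (\<Sum>x\<in>set_pmf P. if restrict x A = restrict y A then g y * pmf P y * (pmf P x / \<mu> y) else 0)"
    proof (rule sum.cong[OF refl])
      fix x assume "x \<in> set_pmf P"
      show "(if restrict y A = restrict x A then pmf P x * g y * pmf P y / \<mu> x else 0) = (if restrict x A = restrict y A then g y * pmf P y * (pmf P x / \<mu> y) else 0)"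
        using mu_sym[of x y] by auto
    qed
    also have "\<dots> = g y * pmf P y * ((\<Sum>x\<in>{x\<in>set_pmf P. x \<in> {z. restrict z A = restrict y A}}. pmf P x) / \<mu> y)"
      by (simp add: sum.inter_filter[OF fin] sum_distrib_left sum_divide_distrib, intro sum.cong refl, simp)
    finally show "(\<Sum>x\<in>set_pmf P. if restrict y A = restrict x A then pmf P x * g y * pmf P y / \<mu> x else 0) = g y * pmf P y * ((\<Sum>x\<in>{x\<in>set_pmf P. x \<in> {z. restrict z A = restrict y A}}. pmf P x) / \<mu> y)" .
  qed
  also have "\<dots> = (\<Sum>y\<in>set_pmf P. g y * pmf P y)"
  proof (rule sum.cong[OF refl])
    fix y assume y: "y \<in> set_pmf P"
    have "(\<Sum>x\<in>{x\<in>set_pmf P. x \<in> {z. restrict z A = restrict y A}}. pmf P x) = \<mu> y"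
      unfolding \<mu>_def measure_repr[OF fin] ..
    then show "g y * pmf P y * ((\<Sum>x\<in>{x\<in>set_pmf P. x \<in> {z. restrict z A = restrict y A}}. pmf P x) / \<mu> y) = g y * pmf P y"
      using mu_pos[OF y] by simp
  qed
  finally show ?thesis .
qed

lemma restr_grp:
  "restrict y (grp_union G C) = restrict x (grp_union G C) \<longleftrightarrow> (\<forall>m\<in>C. restrict y (G m) = restrict x (G m))"
  unfolding grp_union_def restrict_def fun_eq_iff by auto

lemma finite_support:
  fixes P :: "(nat \<Rightarrow> bool) pmf"
  assumes "set_pmf P \<subseteq> {x. \<forall>j. x j \<longrightarrow> j \<in> {1..p}}"
  shows "finite (set_pmf P)"
proof -
  have "{x::nat\<Rightarrow>bool. \<forall>j. x j \<longrightarrow> j \<in> {1..p}} \<subseteq> (\<lambda>X j. j \<in> X) ` Pow {1..p}"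
  proof
    fix x :: "nat \<Rightarrow> bool" assume "x \<in> {x. \<forall>j. x j \<longrightarrow> j \<in> {1..p}}"
    then have "{j. x j} \<in> Pow {1..p}" and "x = (\<lambda>j. j \<in> {j. x j})" by auto
    then show "x \<in> (\<lambda>X j. j \<in> X) ` Pow {1..p}" by blast
  qed
  moreover have "finite ((\<lambda>X j. j \<in> X) ` Pow {1..p})" by simp
  ultimately show ?thesis using assms by (metis (no_types, lifting) finite_subset order_trans)
qed

locale grp_setup =
  fixes P :: "(nat \<Rightarrow> bool) pmf" and G :: "nat \<Rightarrow> nat set" and M :: nat
  assumes fin: "finite (set_pmf P)"
    and indep: "prob_space.indep_vars (measure_pmf P) (\<lambda>m. count_space UNIV) (\<lambda>m x. restrict x (G m)) {1..M}"
begin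

lemma factor:
  assumes J: "J \<subseteq> {1..M}"
  shows "measure P {y. \<forall>m\<in>J. restrict y (G m) = v m} = (\<Prod>m\<in>J. measure P {y. restrict y (G m) = v m})"
proof (cases "J = {}")
  case True then show ?thesis by simp
next
  case False
  have ind: "prob_space.indep_sets (measure_pmf P) (\<lambda>m. {(\<lambda>x. restrict x (G m)) -` A \<inter> space (measure_pmf P) | A. A \<in> sets (count_space UNIV)}) {1..M}"
    using indep unfolding prob_space.indep_vars_def2[OF prob_space_measure_pmf] by blast
  have "measure P (\<Inter>m\<in>J. (\<lambda>x. restrict x (G m)) -` {v m} \<inter> space (measure_pmf P)) = (\<Prod>m\<in>J. measure P ((\<lambda>x. restrict x (G m)) -` {v m} \<inter> space (measure_pmf P)))"
    by (rule prob_space.indep_setsD[OF prob_space_measure_pmf ind J False]) (use J finite_subset[OF J] in auto)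
  moreover have "(\<Inter>m\<in>J. (\<lambda>x. restrict x (G m)) -` {v m} \<inter> space (measure_pmf P)) = {y. \<forall>m\<in>J. restrict y (G m) = v m}"
    using False by auto
  ultimately show ?thesis by (simp add: vimage_def)
qed

lemma split_indep:
  assumes C: "C \<subseteq> {1..M}" and D: "D \<subseteq> {1..M}" and CD: "C \<inter> D = {}"
  shows "measure P {y. restrict y (grp_union G C) = restrict x0 (grp_union G C) \<and> restrict y (grp_union G D) = restrict x1 (grp_union G D)}
       = measure P {y. restrict y (grp_union G C) = restrict x0 (grp_union G C)} * measure P {y. restrict y (grp_union G D) = restrict x1 (grp_union G D)}"
proof -
  define v where "v m = (if m \<in> C then restrict x0 (G m) else restrict x1 (G m))" for m
  have e1: "{y. restrict y (grp_union G C) = restrict x0 (grp_union G C) \<and> restrict y (grp_union G D) = restrict x1 (grp_union G D)} = {y. \<forall>m\<in>C\<union>D. restrict y (G m) = v m}"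
    using CD unfolding restr_grp v_def by auto
  have e2: "{y. restrict y (grp_union G C) = restrict x0 (grp_union G C)} = {y. \<forall>m\<in>C. restrict y (G m) = v m}"
    unfolding restr_grp v_def by auto
  have e3: "{y. restrict y (grp_union G D) = restrict x1 (grp_union G D)} = {y. \<forall>m\<in>D. restrict y (G m) = v m}"
    using CD unfolding restr_grp v_def by auto
  have fC: "finite C" and fD: "finite D" using finite_subset[OF C] finite_subset[OF D] by auto
  show ?thesis unfolding e1 e2 e3 factor[OF C] factor[OF D] factor[of "C \<union> D"]
    using C D CD fC fD factor[of "C \<union> D"] by (simp add: prod.union_disjoint)
qed

lemma ce_indep:
  assumes x: "x \<in> set_pmf P" and C: "C \<subseteq> {1..M}" and D: "D \<subseteq> {1..M}" and CD: "C \<inter> D = {}"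
    and g: "\<And>y. restrict y (grp_union G C) = restrict x (grp_union G C) \<Longrightarrow> g y = \<psi> (restrict y (grp_union G D))"
  shows "cond_exp_coords P (grp_union G C) g x = (\<Sum>y\<in>set_pmf P. \<psi> (restrict y (grp_union G D)) * pmf P y)"
proof -
  let ?S = "{y. restrict y (grp_union G C) = restrict x (grp_union G C)}"
  let ?\<pi> = "\<lambda>y. restrict y (grp_union G D)"
  have pos: "measure P ?S > 0" using ce_pos[OF x] .
  have "cond_exp_coords P (grp_union G C) g x = (\<Sum>y\<in>{y\<in>set_pmf P. restrict y (grp_union G C) = restrict x (grp_union G C)}. \<psi> (?\<pi> y) * pmf P y) / measure P ?S"
    unfolding ce_repr[OF fin x] by (intro arg_cong2[where f="(/)"] sum.cong refl) (auto simp: g)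
  also have "(\<Sum>y\<in>{y\<in>set_pmf P. restrict y (grp_union G C) = restrict x (grp_union G C)}. \<psi> (?\<pi> y) * pmf P y) = (\<Sum>b\<in>?\<pi> ` set_pmf P. \<psi> b * measure P {y. restrict y (grp_union G C) = restrict x (grp_union G C) \<and> ?\<pi> y = b})"
    by (rule group[OF fin])
  also have "\<dots> = (\<Sum>b\<in>?\<pi> ` set_pmf P. \<psi> b * (measure P ?S * measure P {y. ?\<pi> y = b}))"
  proof (rule sum.cong[OF refl])
    fix b assume "b \<in> ?\<pi> ` set_pmf P"
    then obtain x1 where b: "b = ?\<pi> x1" by auto
    show "\<psi> b * measure P {y. restrict y (grp_union G C) = restrict x (grp_union G C) \<and> ?\<pi> y = b} = \<psi> b * (measure P ?S * measure P {y. ?\<pi> y = b})"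
      unfolding b split_indep[OF C D CD] ..
  qed
  also have "\<dots> = measure P ?S * (\<Sum>b\<in>?\<pi> ` set_pmf P. \<psi> b * measure P {y. True \<and> ?\<pi> y = b})"
    by (simp add: sum_distrib_left algebra_simps)
  also have "(\<Sum>b\<in>?\<pi> ` set_pmf P. \<psi> b * measure P {y. True \<and> ?\<pi> y = b}) = (\<Sum>y\<in>{y\<in>set_pmf P. True}. \<psi> (?\<pi> y) * pmf P y)"
    by (rule group[OF fin, symmetric])
  also have "{y\<in>set_pmf P. True} = set_pmf P" by simp
  finally have eq: "cond_exp_coords P (grp_union G C) g x = measure P ?S * (\<Sum>y\<in>set_pmf P. \<psi> (?\<pi> y) * pmf P y) / measure P ?S" .
  have ne: "measure P ?S \<noteq> 0" using pos by linarith
  show ?thesis unfolding eq by (rule nonzero_mult_div_cancel_left[OF ne])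
qed

end


lemma ce_sub:
  assumes fin: "finite (set_pmf P)" and x: "x \<in> set_pmf P" and TC: "T \<subseteq> C"
  shows "cond_exp_coords P (grp_union G C) (\<lambda>y. h' (restrict y (grp_union G T))) x = h' (restrict x (grp_union G T))"
proof (rule ce_const[OF fin x])
  fix y assume "restrict y (grp_union G C) = restrict x (grp_union G C)"
  then have "restrict y (grp_union G T) = restrict x (grp_union G T)"
    using TC unfolding restr_grp by blast
  then show "h' (restrict y (grp_union G T)) = h' (restrict x (grp_union G T))" by simp
qed

context grp_setup begin

lemma ce_mixed:
  assumes x: "x \<in> set_pmf P" and C: "C \<subseteq> {1..M}" and l: "l \<in> C" and l': "l' \<in> {1..M}" "l' \<notin> C"
  shows "cond_exp_coords P (grp_union G C) (\<lambda>y. h' (restrict y (grp_union G {l,l'}))) x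
       = cond_exp_coords P (G l) (\<lambda>y. h' (restrict y (grp_union G {l,l'}))) x"
proof -
  define \<psi> where "\<psi> b = h' (restrict (\<lambda>i. if i \<in> G l then x i else b i) (grp_union G {l,l'}))" for b
  have key: "h' (restrict y (grp_union G {l,l'})) = \<psi> (restrict y (grp_union G {l'}))"
    if "\<forall>i\<in>G l. y i = x i" for y
  proof -
    have "restrict y (grp_union G {l,l'}) = restrict (\<lambda>i. if i \<in> G l then x i else restrict y (grp_union G {l'}) i) (grp_union G {l,l'})"
      using that unfolding grp_union_def restrict_def fun_eq_iff by auto
    then show ?thesis unfolding \<psi>_def by simp
  qed
  have lsub: "{l} \<subseteq> {1..M}" using l C by auto
  have "cond_exp_coords P (grp_union G C) (\<lambda>y. h' (restrict y (grp_union G {l,l'}))) x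
      = (\<Sum>y\<in>set_pmf P. \<psi> (restrict y (grp_union G {l'})) * pmf P y)"
  proof (rule ce_indep[OF x C])
    fix y assume "restrict y (grp_union G C) = restrict x (grp_union G C)"
    then have "restrict y (G l) = restrict x (G l)" using l unfolding restr_grp by blast
    then have "\<forall>i\<in>G l. y i = x i" unfolding restrict_def fun_eq_iff by metis
    then show "h' (restrict y (grp_union G {l,l'})) = \<psi> (restrict y (grp_union G {l'}))" by (rule key)
  qed (use l' in auto)
  also have "\<dots> = cond_exp_coords P (grp_union G {l}) (\<lambda>y. h' (restrict y (grp_union G {l,l'}))) x"
  proof (rule ce_indep[OF x lsub, symmetric])
    fix y assume "restrict y (grp_union G {l}) = restrict x (grp_union G {l})"
    then have "restrict y (G l) = restrict x (G l)" unfolding restr_grp by blast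
    then have "\<forall>i\<in>G l. y i = x i" unfolding restrict_def fun_eq_iff by metis
    then show "h' (restrict y (grp_union G {l,l'})) = \<psi> (restrict y (grp_union G {l'}))" by (rule key)
  qed (use l' l in auto)
  also have "grp_union G {l} = G l" unfolding grp_union_def by simp
  finally show ?thesis .
qed

end


theorem mainTheorem11:
  fixes p M K :: nat
    and G :: "nat \<Rightarrow> nat set"
    and P :: "(nat \<Rightarrow> bool) pmf"
    and S1 :: "nat set" and S2 :: "nat set set"
    and h :: "nat set \<Rightarrow> (nat \<Rightarrow> bool) \<Rightarrow> real"
    and f :: "(nat \<Rightarrow> bool) \<Rightarrow> real"
    and Js :: "nat \<Rightarrow> nat set"
  assumes support: "set_pmf P \<subseteq> {x. \<forall>j. x j \<longrightarrow> j \<in> {1..p}}"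
    and grp_nonempty: "\<forall>m\<in>{1..M}. G m \<noteq> {}"
    and grp_disj: "disjoint_family_on G {1..M}"
    and grp_cover: "(\<Union>m\<in>{1..M}. G m) = {1..p}"
    and indep: "prob_space.indep_vars (measure_pmf P) (\<lambda>m. count_space UNIV)
                  (\<lambda>m x. restrict x (G m)) {1..M}"
    and S1_sub: "S1 \<subseteq> {1..M}"
    and S2_sub: "S2 \<subseteq> {J. J \<subseteq> {1..M} \<and> card J = 2}"
    and f_def: "\<forall>x. f x = (\<Sum>m\<in>S1. h {m} (restrict x (grp_union G {m})))
                         + (\<Sum>J\<in>S2. h J (restrict x (grp_union G J)))"
    and h_main_centered: "\<forall>m\<in>S1.
          measure_pmf.expectation P (\<lambda>x. h {m} (restrict x (grp_union G {m}))) = 0"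
    and h_int_centered: "\<forall>J\<in>S2. \<forall>l\<in>J. \<forall>x\<in>set_pmf P.
          cond_exp_coords P (G l) (\<lambda>y. h J (restrict y (grp_union G J))) x = 0"
    and h_zero: "\<forall>J. J \<notin> ((\<lambda>m. {m}) ` S1) \<union> S2 \<longrightarrow> h J = (\<lambda>_. 0)"
    and K_pos: "K \<ge> 1"
    and Js_distinct: "inj_on Js {1..2*K}"
    and Js_sub: "\<forall>l\<in>{1..2*K}. Js l \<subseteq> {1..M}"
    and Js_card1: "\<forall>l\<in>{1..K}. card (Js l) = 1"
    and Js_card2: "\<forall>l\<in>{K+1..2*K}. card (Js l) = 2"
  shows "\<forall>s. 0 < s \<and> s \<le> 2*K \<longrightarrow> (\<forall>x\<in>set_pmf P.
           Rseq P G f Js s x =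
             (\<Sum>l=1..s. h (Js l) (restrict x (grp_union G (Js l))))
           + (\<Sum>m\<in>(\<Union>k\<in>{K+1..s}. Js k) - (\<Union>k\<in>{1..K}. Js k).
                 h {m} (restrict x (grp_union G {m}))))"
proof -
  have fin: "finite (set_pmf P)" by (rule finite_support[OF support])
  interpret grp_setup P G M using fin indep by unfold_locales
  define hT where "hT T y = h T (restrict y (grp_union G T))" for T y
  define I1 where "I1 = (\<Union>k\<in>{1..K}. Js k)"
  define I2 where "I2 s = (\<Union>k\<in>{K+1..s}. Js k)" for s
  define F where "F s x = (\<Sum>l=1..s. hT (Js l) x) + (\<Sum>m\<in>I2 s - I1. hT {m} x)" for s x
  have finS1: "finite S1" using S1_sub finite_subset by blast
  have finS2: "finite S2"
  proof -
    have "S2 \<subseteq> Pow {1..M}" using S2_sub by auto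
    then show ?thesis by (rule finite_subset) simp
  qed
  have hz1: "hT {m} x = 0" if "m \<notin> S1" for m x
  proof -
    have "{m} \<notin> ((\<lambda>m. {m}) ` S1) \<union> S2" using that S2_sub by auto
    then show ?thesis using h_zero unfolding hT_def by auto
  qed
  have hz2: "hT J x = 0" if "J \<notin> S2" "card J = 2" for J x
  proof -
    have "J \<notin> ((\<lambda>m. {m}) ` S1) \<union> S2" using that by auto
    then show ?thesis using h_zero unfolding hT_def by auto
  qed
  have E_eq: "measure_pmf.expectation P g = (\<Sum>y\<in>set_pmf P. g y * pmf P y)" for g :: "(nat \<Rightarrow> bool) \<Rightarrow> real"
    by (rule integral_measure_pmf_real) (use fin in auto)
  have CE: "cond_exp_coords P (grp_union G C) (hT T) x = (if T \<subseteq> C then hT T x else 0)"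
    if x: "x \<in> set_pmf P" and C: "C \<subseteq> {1..M}" for x C T
  proof (cases "T \<subseteq> C")
    case True
    then show ?thesis unfolding hT_def using ce_sub[OF fin x True] by simp
  next
    case False
    show ?thesis
    proof (cases "T \<in> ((\<lambda>m. {m}) ` S1) \<union> S2")
      case notin: False
      then have "hT T y = 0" for y using h_zero unfolding hT_def by auto
      then show ?thesis using False by (simp add: ce_const[OF fin x])
    next
      case True
      then consider (one) m where "m \<in> S1" "T = {m}" | (two) "T \<in> S2" by blast
      then show ?thesis
      proof cases
        case one
        have mC: "m \<notin> C" using False one by auto
        have "cond_exp_coords P (grp_union G C) (hT T) x = (\<Sum>y\<in>set_pmf P. h T (restrict y (grp_union G T)) * pmf P y)"
          unfolding hT_def by (rule ce_indep[OF x C, where D=T and \<psi>="h T"]) (use one S1_sub mC in auto)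
        also have "\<dots> = 0" using h_main_centered one unfolding E_eq by auto
        finally show ?thesis using False by simp
      next
        case two
        then have T: "T \<subseteq> {1..M}" "card T = 2" using S2_sub by auto
        then obtain l l' where ll: "T = {l,l'}" "l \<noteq> l'" by (meson card_2_iff)
        have Ezero: "(\<Sum>y\<in>set_pmf P. hT T y * pmf P y) = 0"
        proof -
          have "(\<Sum>y\<in>set_pmf P. hT T y * pmf P y) = (\<Sum>z\<in>set_pmf P. pmf P z * cond_exp_coords P (G l) (hT T) z)"
            by (rule tower[OF fin, symmetric])
          also have "\<dots> = 0" using h_int_centered two ll unfolding hT_def by simp
          finally show ?thesis .
        qed
        show ?thesis
        proof (cases "T \<inter> C = {}")
          case True
          have "cond_exp_coords P (grp_union G C) (hT T) x = (\<Sum>y\<in>set_pmf P. h T (restrict y (grp_union G T)) * pmf P y)"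
            unfolding hT_def by (rule ce_indep[OF x C T(1), where \<psi>="h T"]) (use True in auto)
          also have "\<dots> = 0" using Ezero unfolding hT_def .
          finally show ?thesis using False by simp
        next
          case nd: False
          then obtain a b where ab: "T = {a,b}" "a \<in> C" "b \<notin> C"
            using False ll by blast
          have "cond_exp_coords P (grp_union G C) (hT T) x = cond_exp_coords P (G a) (hT T) x"
            unfolding hT_def ab by (rule ce_mixed[OF x C ab(2) _ ab(3)]) (use T ab in auto)
          also have "\<dots> = 0" using h_int_centered two ab x unfolding hT_def by simp
          finally show ?thesis using False by simp
        qed
      qed
    qed
  qed
  have Js_sub': "Js l \<subseteq> {1..M}" if "l \<in> {1..2*K}" for l using Js_sub that by blast
  have sing: "Js l = {the_elem (Js l)}" if "l \<in> {1..K}" for l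
  proof -
    from Js_card1 that have "card (Js l) = 1" by blast
    then obtain a where "Js l = {a}" by (rule card_1_singletonE)
    then show ?thesis by simp
  qed
  have I1sub: "I1 \<subseteq> {1..M}" unfolding I1_def using Js_sub by auto
  have I2sub: "I2 s \<subseteq> {1..M}" if "s \<le> 2*K" for s unfolding I2_def using Js_sub that by auto
  have fsum: "f y = (\<Sum>m\<in>S1. hT {m} y) + (\<Sum>J\<in>S2. hT J y)" for y
    using f_def unfolding hT_def by simp
  have main: "\<forall>x\<in>set_pmf P. Rseq P G f Js s x = F s x" if "s \<le> 2*K" for s
    using that
  proof (induction s)
    case 0
    then show ?case using K_pos unfolding F_def I2_def by simp
  next
    case (Suc s)
    have IH: "\<forall>x\<in>set_pmf P. Rseq P G f Js s x = F s x" using Suc by simp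
    define C where "C = Js (Suc s)"
    have Cs: "Suc s \<in> {1..2*K}" using Suc.prems by simp
    have C: "C \<subseteq> {1..M}" unfolding C_def using Js_sub Cs by blast
    have finC: "finite C" using C finite_subset by blast
    have finI2: "finite (I2 s)" using I2sub[of s] Suc.prems finite_subset by auto
    have finI1: "finite I1" using I1sub finite_subset by auto
    show ?case
    proof
      fix x assume x: "x \<in> set_pmf P"
      have Fsum: "F s y = (\<Sum>l=1..s. hT (Js l) y) + (\<Sum>m\<in>I2 s - I1. hT {m} y)" for y unfolding F_def ..
      have ceq: "cond_exp_coords P (grp_union G C) (\<lambda>y. f y - Rseq P G f Js s y) x = cond_exp_coords P (grp_union G C) (\<lambda>y. f y - F s y) x"
        by (rule ce_cong[OF fin x]) (use IH in auto)
      have "Rseq P G f Js (Suc s) x = F s x + cond_exp_coords P (grp_union G C) (\<lambda>y. f y - F s y) x"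
        using IH x ceq by (simp add: C_def)
      also have "cond_exp_coords P (grp_union G C) (\<lambda>y. f y - F s y) x
         = cond_exp_coords P (grp_union G C) (\<lambda>y. ((\<Sum>m\<in>S1. hT {m} y) + (\<Sum>J\<in>S2. hT J y)) - ((\<Sum>l=1..s. hT (Js l) y) + (\<Sum>m\<in>I2 s - I1. hT {m} y))) x"
        by (simp only: fsum Fsum)
      also have "\<dots> = ((\<Sum>m\<in>S1. cond_exp_coords P (grp_union G C) (hT {m}) x) + (\<Sum>J\<in>S2. cond_exp_coords P (grp_union G C) (hT J) x))
           - ((\<Sum>l=1..s. cond_exp_coords P (grp_union G C) (hT (Js l)) x) + (\<Sum>m\<in>I2 s - I1. cond_exp_coords P (grp_union G C) (hT {m}) x))"
        by (simp only: ce_diff[OF fin x] ce_add[OF fin x] ce_sum[OF fin x])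
      also have "\<dots> = ((\<Sum>m\<in>S1. if {m} \<subseteq> C then hT {m} x else 0) + (\<Sum>J\<in>S2. if J \<subseteq> C then hT J x else 0))
           - ((\<Sum>l=1..s. if Js l \<subseteq> C then hT (Js l) x else 0) + (\<Sum>m\<in>I2 s - I1. if {m} \<subseteq> C then hT {m} x else 0))"
        by (simp only: CE[OF x C])
      also have "F s x + \<dots> = F (Suc s) x"
      proof (cases "Suc s \<le> K")
        case True
        have s1: "Suc s \<in> {1..K}" using True by simp
        have "card (Js (Suc s)) = 1" using Js_card1 s1 by blast
        then obtain a where "Js (Suc s) = {a}" by (rule card_1_singletonE)
        then have Ca: "C = {a}" unfolding C_def .
        have t1: "(\<Sum>m\<in>S1. if {m} \<subseteq> C then hT {m} x else 0) = hT C x"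
        proof -
          have "(\<Sum>m\<in>S1. if {m} \<subseteq> C then hT {m} x else 0) = (\<Sum>m\<in>S1. if m = a then hT {m} x else 0)"
            by (simp add: Ca)
          also have "\<dots> = (if a \<in> S1 then hT {a} x else 0)" using finS1 by simp
          also have "\<dots> = hT C x" using hz1 Ca by auto
          finally show ?thesis .
        qed
        have t2: "(\<Sum>J\<in>S2. if J \<subseteq> C then hT J x else 0) = 0"
        proof (rule sum.neutral, rule ballI)
          fix J assume J: "J \<in> S2"
          have "\<not> J \<subseteq> C"
          proof
            assume "J \<subseteq> C"
            then have "card J \<le> card C" using finC by (rule card_mono[rotated])
            then show False using J S2_sub Ca by auto
          qed
          then show "(if J \<subseteq> C then hT J x else 0) = 0" by simp
        qed
        have t3: "(\<Sum>l=1..s. if Js l \<subseteq> C then hT (Js l) x else 0) = 0"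
        proof (rule sum.neutral, rule ballI)
          fix l assume l: "l \<in> {1..s}"
          then have lK: "l \<in> {1..K}" using True by auto
          have "\<not> Js l \<subseteq> C"
          proof
            assume sub: "Js l \<subseteq> C"
            obtain b where b: "Js l = {b}" using sing[OF lK] by blast
            have "Js l = C" using b sub Ca by auto
            then have "l = Suc s" using inj_onD[OF Js_distinct _ _ Cs, of l] lK unfolding C_def by auto
            then show False using l by simp
          qed
          then show "(if Js l \<subseteq> C then hT (Js l) x else 0) = 0" by simp
        qed
        have I2e: "I2 s = {}" "I2 (Suc s) = {}" unfolding I2_def using True by auto
        show ?thesis
          unfolding F_def using t1 t2 t3 I2e by (simp add: C_def)
      next
        case False
        then have Ks: "K \<le> s" by simp
        have s2: "Suc s \<in> {K+1..2*K}" using Ks Suc.prems by simp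
        have cC: "card C = 2" using Js_card2 s2 unfolding C_def by blast
        have t1: "(\<Sum>m\<in>S1. if {m} \<subseteq> C then hT {m} x else 0) = (\<Sum>m\<in>C. hT {m} x)"
        proof -
          have "(\<Sum>m\<in>S1. if {m} \<subseteq> C then hT {m} x else 0) = (\<Sum>m\<in>S1. if m \<in> C then hT {m} x else 0)"
            by simp
          also have "\<dots> = (\<Sum>m\<in>{m\<in>S1. m \<in> C}. hT {m} x)" by (rule sum.inter_filter[OF finS1, symmetric])
          also have "\<dots> = (\<Sum>m\<in>C. hT {m} x)"
            by (rule sum.mono_neutral_left[OF finC]) (use hz1 in auto)
          finally show ?thesis .
        qed
        have t2: "(\<Sum>J\<in>S2. if J \<subseteq> C then hT J x else 0) = hT C x"
        proof -
          have "(\<Sum>J\<in>S2. if J \<subseteq> C then hT J x else 0) = (\<Sum>J\<in>S2. if J = C then hT J x else 0)"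
          proof (rule sum.cong[OF refl])
            fix J assume J: "J \<in> S2"
            then have "card J = 2" using S2_sub by auto
            then have "J \<subseteq> C \<longleftrightarrow> J = C" using card_subset_eq[OF finC, of J] cC by auto
            then show "(if J \<subseteq> C then hT J x else 0) = (if J = C then hT J x else 0)" by simp
          qed
          also have "\<dots> = (if C \<in> S2 then hT C x else 0)" using finS2 by simp
          also have "\<dots> = hT C x" using hz2[OF _ cC] by auto
          finally show ?thesis .
        qed
        have t3: "(\<Sum>l=1..s. if Js l \<subseteq> C then hT (Js l) x else 0) = (\<Sum>m\<in>C \<inter> I1. hT {m} x)"
        proof -
          define L where "L = {l\<in>{1..K}. Js l \<subseteq> C}"
          have "(\<Sum>l=1..s. if Js l \<subseteq> C then hT (Js l) x else 0) = (\<Sum>l\<in>{l\<in>{1..s}. Js l \<subseteq> C}. hT (Js l) x)"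
            by (rule sum.inter_filter[symmetric]) simp
          also have "{l\<in>{1..s}. Js l \<subseteq> C} = L"
          proof
            show "{l\<in>{1..s}. Js l \<subseteq> C} \<subseteq> L"
            proof
              fix l assume l: "l \<in> {l\<in>{1..s}. Js l \<subseteq> C}"
              have "l \<le> K"
              proof (rule ccontr)
                assume "\<not> l \<le> K"
                then have l2: "l \<in> {K+1..2*K}" using l Suc.prems by auto
                then have "card (Js l) = 2" using Js_card2 by blast
                then have "Js l = C" using card_subset_eq[OF finC, of "Js l"] cC l by auto
                then have "l = Suc s" using inj_onD[OF Js_distinct _ _ Cs, of l] l2 unfolding C_def by auto
                then show False using l by simp
              qed
              then show "l \<in> L" using l unfolding L_def by auto
            qed
            show "L \<subseteq> {l\<in>{1..s}. Js l \<subseteq> C}" unfolding L_def using Ks by auto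
          qed
          also have "(\<Sum>l\<in>L. hT (Js l) x) = (\<Sum>l\<in>L. hT {the_elem (Js l)} x)"
          proof (rule sum.cong[OF refl])
            fix l assume "l \<in> L"
            then have e: "Js l = {the_elem (Js l)}" by (intro sing) (simp add: L_def)
            show "hT (Js l) x = hT {the_elem (Js l)} x" by (rule arg_cong[where f="\<lambda>T. hT T x", OF e])
          qed
          also have "\<dots> = (\<Sum>m\<in>C \<inter> I1. hT {m} x)"
          proof (rule sum.reindex_bij_betw)
            show "bij_betw (\<lambda>l. the_elem (Js l)) L (C \<inter> I1)"
              unfolding bij_betw_def
            proof
              show "inj_on (\<lambda>l. the_elem (Js l)) L"
              proof
                fix l1 l2 assume l12: "l1 \<in> L" "l2 \<in> L" "the_elem (Js l1) = the_elem (Js l2)"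
                have e1: "Js l1 = {the_elem (Js l1)}" by (intro sing) (use l12 in \<open>simp add: L_def\<close>)
                have e2: "Js l2 = {the_elem (Js l2)}" by (intro sing) (use l12 in \<open>simp add: L_def\<close>)
                have "Js l1 = Js l2" by (metis e1 e2 l12(3))
                moreover have "l1 \<in> {1..2*K}" "l2 \<in> {1..2*K}" using l12 unfolding L_def by auto
                ultimately show "l1 = l2" by (rule inj_onD[OF Js_distinct])
              qed
              show "(\<lambda>l. the_elem (Js l)) ` L = C \<inter> I1"
              proof
                show "(\<lambda>l. the_elem (Js l)) ` L \<subseteq> C \<inter> I1"
                proof
                  fix m assume "m \<in> (\<lambda>l. the_elem (Js l)) ` L"
                  then obtain l where l: "l \<in> L" "m = the_elem (Js l)" by auto
                  have e: "Js l = {the_elem (Js l)}" by (intro sing) (use l in \<open>simp add: L_def\<close>)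
                  have "Js l = {m}" unfolding l(2) by (rule e)
                  then show "m \<in> C \<inter> I1" using l unfolding L_def I1_def by auto
                qed
                show "C \<inter> I1 \<subseteq> (\<lambda>l. the_elem (Js l)) ` L"
                proof
                  fix m assume m: "m \<in> C \<inter> I1"
                  then obtain k where k: "k \<in> {1..K}" "m \<in> Js k" unfolding I1_def by auto
                  obtain b where b: "Js k = {b}" using sing[OF k(1)] by blast
                  have "Js k = {m}" using b k by auto
                  then have "k \<in> L" "the_elem (Js k) = m" using m k unfolding L_def by auto
                  then show "m \<in> (\<lambda>l. the_elem (Js l)) ` L" by force
                qed
              qed
            qed
          qed
          finally show ?thesis .
        qed
        have t4: "(\<Sum>m\<in>I2 s - I1. if {m} \<subseteq> C then hT {m} x else 0) = (\<Sum>m\<in>C \<inter> (I2 s - I1). hT {m} x)"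
        proof -
          have "(\<Sum>m\<in>I2 s - I1. if {m} \<subseteq> C then hT {m} x else 0) = (\<Sum>m\<in>I2 s - I1. if m \<in> C then hT {m} x else 0)"
            by simp
          also have "\<dots> = (\<Sum>m\<in>{m\<in>I2 s - I1. m \<in> C}. hT {m} x)"
            by (rule sum.inter_filter[symmetric]) (use finI2 in simp)
          also have "{m\<in>I2 s - I1. m \<in> C} = C \<inter> (I2 s - I1)" by auto
          finally show ?thesis .
        qed
        have I2S: "I2 (Suc s) = I2 s \<union> C"
        proof -
          have "{K+1..Suc s} = insert (Suc s) {K+1..s}" using Ks by auto
          then show ?thesis unfolding I2_def C_def by auto
        qed
        have u1: "(\<Sum>m\<in>(I2 s \<union> C) - I1. hT {m} x) = (\<Sum>m\<in>I2 s - I1. hT {m} x) + (\<Sum>m\<in>C - I1 - I2 s. hT {m} x)"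
        proof -
          have e: "(I2 s \<union> C) - I1 = (I2 s - I1) \<union> (C - I1 - I2 s)" by auto
          show ?thesis unfolding e by (rule sum.union_disjoint) (use finI2 finC in auto)
        qed
        have u2: "(\<Sum>m\<in>C. hT {m} x) = (\<Sum>m\<in>C \<inter> I1. hT {m} x) + ((\<Sum>m\<in>C \<inter> (I2 s - I1). hT {m} x) + (\<Sum>m\<in>C - I1 - I2 s. hT {m} x))"
        proof -
          have e: "C = (C \<inter> I1) \<union> ((C \<inter> (I2 s - I1)) \<union> (C - I1 - I2 s))" by auto
          have "(\<Sum>m\<in>C. hT {m} x) = (\<Sum>m\<in>(C \<inter> I1) \<union> ((C \<inter> (I2 s - I1)) \<union> (C - I1 - I2 s)). hT {m} x)"
            using e by simp
          also have "\<dots> = (\<Sum>m\<in>C \<inter> I1. hT {m} x) + (\<Sum>m\<in>(C \<inter> (I2 s - I1)) \<union> (C - I1 - I2 s). hT {m} x)"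
            by (rule sum.union_disjoint) (use finC in auto)
          also have "(\<Sum>m\<in>(C \<inter> (I2 s - I1)) \<union> (C - I1 - I2 s). hT {m} x) = (\<Sum>m\<in>C \<inter> (I2 s - I1). hT {m} x) + (\<Sum>m\<in>C - I1 - I2 s. hT {m} x)"
            by (rule sum.union_disjoint) (use finC in auto)
          finally show ?thesis .
        qed
        have FS: "F (Suc s) x = (\<Sum>l=1..s. hT (Js l) x) + hT C x + (\<Sum>m\<in>(I2 s \<union> C) - I1. hT {m} x)"
          unfolding F_def I2S by (simp add: C_def)
        show ?thesis
          unfolding FS t1 t2 t3 t4 u1 using u2 unfolding F_def by simp
      qed
      finally show "Rseq P G f Js (Suc s) x = F (Suc s) x" .
    qed
  qed
  show ?thesis
    using main unfolding F_def hT_def I1_def I2_def by auto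
qed


end
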